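(* Let $n\ge 2$ and $m_1,\dots,m_n\ge1$ be integers. For $h=1,\dots,n$ let $$|\mathscr{G}_h\rangle=\tfrac{1}{\sqrt2}\Big(|0\rangle\textstyle\bigotimes_{k=2}^{2m_h}|i^h_k\rangle+s_h\,|1\rangle\bigotimes_{k=2}^{2m_h}|\bar i^h_k\rangle\Big)$$ with $i^h_k\in\{0,1\}$ and $s_h\in\{+1,-1\}$, and suppose that either for every $h$ the string $0i^h_2\cdots i^h_{m_h}$ equals $i^h_{m_h+1}\cdots i^h_{2m_h}$, or for every $h$ it equals $\bar i^h_{m_h+1}\cdots\bar i^h_{2m_h}$. Consider $\bigotimes_{h=1}^n|\mathscr{G}_h\rangle$, perform a projective measurement in the GHZ basis (Bell basis when $n=2$, $m_1=m_2=1$) on the first $m_h$ qubits of each state (ordered by $h$), and let $|\mathcal{G}_a\rangle$ be the outcome and $|\mathcal{G}_b\rangle$ the state into which the remaining qubits (the last $m_h$ qubits of each state, ordered by $h$) collapse. If $s_h=+1$ for all $h$, then $|\mathcal{G}_a\rangle$ and $|\mathcal{G}_b\rangle$ are the same. If $s_h=-1$ for all $h$, then $|\mathcal{G}_a\rangle$ and $|\mathcal{G}_b\rangle$ are the same when $n$ is even and different when $n$ is odd.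
   Context: For a bit $b$, $\bar b=1-b$. For $N\ge 2$ qubits, the GHZ basis is the orthonormal basis $\frac{1}{\sqrt2}\big(|0\,b_2\cdots b_N\rangle\pm|1\,\bar b_2\cdots\bar b_N\rangle\big)$, $b_k\in\{0,1\}$; for $N=2$ it is the Bell basis. "Same" means equal as quantum states (up to a global phase). *)

theory Defs
  imports Complex_Main
begin

text \<open>States of N qubits are amplitude functions on computational basis strings
  (bool lists, False = 0, True = 1), zero outside strings of length N.\<close>

definition bitstrings :: "nat \<Rightarrow> bool list set" where
  "bitstrings N = {xs. length xs = N}"

definition ket :: "bool list \<Rightarrow> bool list \<Rightarrow> complex" where
  "ket b = (\<lambda>xs. if xs = b then 1 else 0)"

definition ghz :: "bool list \<Rightarrow> complex \<Rightarrow> bool list \<Rightarrow> complex" where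
  "ghz b sg = (\<lambda>xs. (ket (False # b) xs + sg * ket (True # map Not b) xs) / complex_of_real (sqrt 2))"

definition ghz_basis :: "nat \<Rightarrow> (bool list \<Rightarrow> complex) set" where
  "ghz_basis N = {ghz b sg | b sg. length b = N - 1 \<and> (sg = 1 \<or> sg = -1)}"

definition qnorm :: "nat \<Rightarrow> (bool list \<Rightarrow> complex) \<Rightarrow> real" where
  "qnorm N \<psi> = sqrt (\<Sum>xs\<in>bitstrings N. (cmod (\<psi> xs))^2)"

definition same_state :: "(bool list \<Rightarrow> complex) \<Rightarrow> (bool list \<Rightarrow> complex) \<Rightarrow> bool" where
  "same_state u v \<longleftrightarrow> (\<exists>c. cmod c = 1 \<and> u = (\<lambda>xs. c * v xs))"

definition partial_proj :: "nat \<Rightarrow> (bool list \<Rightarrow> complex) \<Rightarrow> (bool list \<Rightarrow> complex) \<Rightarrow> bool list \<Rightarrow> complex" where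
  "partial_proj M g \<Psi> = (\<lambda>ys. \<Sum>xs\<in>bitstrings M. cnj (g xs) * \<Psi> (xs @ ys))"

definition outcome_prob :: "nat \<Rightarrow> nat \<Rightarrow> (bool list \<Rightarrow> complex) \<Rightarrow> (bool list \<Rightarrow> complex) \<Rightarrow> real" where
  "outcome_prob M K g \<Psi> = (qnorm K (partial_proj M g \<Psi>))^2"

definition post_state :: "nat \<Rightarrow> nat \<Rightarrow> (bool list \<Rightarrow> complex) \<Rightarrow> (bool list \<Rightarrow> complex) \<Rightarrow> bool list \<Rightarrow> complex" where
  "post_state M K g \<Psi> = (\<lambda>ys. partial_proj M g \<Psi> ys / complex_of_real (qnorm K (partial_proj M g \<Psi>)))"

text \<open>Qubit bookkeeping: state h (h < n) has 2 * m h qubits.\<close>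
definition offset :: "(nat \<Rightarrow> nat) \<Rightarrow> nat \<Rightarrow> nat" where
  "offset m h = (\<Sum>j<h. m j)"

definition chunk :: "(nat \<Rightarrow> nat) \<Rightarrow> nat \<Rightarrow> bool list \<Rightarrow> bool list" where
  "chunk m h xs = take (m h) (drop (offset m h) xs)"

text \<open>The tensor product of the states G 0, ..., G (n-1) with the qubits reordered so that
  the first m h qubits of each state come first (ordered by h), followed by the last
  m h qubits of each state (ordered by h).\<close>
definition joint_state :: "nat \<Rightarrow> (nat \<Rightarrow> nat) \<Rightarrow> (nat \<Rightarrow> bool list \<Rightarrow> complex) \<Rightarrow> bool list \<Rightarrow> complex" where
  "joint_state n m G = (\<lambda>xs. if length xs = 2 * offset m n
     then (\<Prod>h<n. G h (chunk m h (take (offset m n) xs) @ chunk m h (drop (offset m n) xs)))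
     else 0)"

end

theory Submission
  imports Defs
begin

lemma offset_Suc: "offset m (Suc n) = offset m n + m n"
  by (simp add: offset_def)

lemma take_offset_eq:
  "(\<forall>h<n. chunk m h xs = chunk m h ys) \<Longrightarrow> take (offset m n) xs = take (offset m n) ys"
proof (induction n)
  case 0 then show ?case by (simp add: offset_def)
next
  case (Suc n)
  then have "take (offset m n) xs = take (offset m n) ys" by simp
  moreover have "chunk m n xs = chunk m n ys" using Suc.prems by simp
  ultimately show ?case by (simp add: offset_Suc take_add chunk_def)
qed

lemma chunk_eq_imp_eq:
  "length xs = offset m n \<Longrightarrow> length ys = offset m n \<Longrightarrow> (\<forall>h<n. chunk m h xs = chunk m h ys) \<Longrightarrow> xs = ys"
  by (metis take_all order_refl take_offset_eq)

lemma chunk_map: "chunk m h (map f xs) = map f (chunk m h xs)"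
  by (simp add: chunk_def take_map drop_map)

lemma map_Not_eq: "(map Not z = p) = (z = map Not p)"
  by (auto simp: comp_def)

lemma ghz_flip:
  assumes "sg = 1 \<or> sg = -1"
  shows "ghz b sg (map Not z) = sg * ghz b sg z"
  using assms by (auto simp: ghz_def ket_def map_Not_eq field_simps comp_def)

lemma offset_le: "h < n \<Longrightarrow> offset m h + m h \<le> offset m n"
  by (metis offset_Suc offset_def Suc_leI lessThan_subset_iff finite_lessThan sum_mono2 zero_le)

lemma len_chunk: "length xs = offset m n \<Longrightarrow> h < n \<Longrightarrow> length (chunk m h xs) = m h"
  using offset_le[of h n m] by (simp add: chunk_def)

lemma joint_append:
  "length xs = offset m n \<Longrightarrow> length ys = offset m n \<Longrightarrow>
   joint_state n m G (xs @ ys) = (\<Prod>h<n. G h (chunk m h xs @ chunk m h ys))"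
  by (simp add: joint_state_def)

lemma joint_flip:
  assumes "\<And>h z. h < n \<Longrightarrow> G h (map Not z) = sig h * G h z"
  shows "joint_state n m G (map Not zs) = (\<Prod>h<n. sig h) * joint_state n m G zs"
  using assms by (simp add: joint_state_def take_map drop_map chunk_map prod.distrib flip: map_append)

lemma joint_nonzero:
  assumes "joint_state n m G (xs @ ys) \<noteq> 0" "length xs = offset m n"
  shows "length ys = offset m n \<and> (\<forall>h<n. G h (chunk m h xs @ chunk m h ys) \<noteq> 0)"
proof -
  have "length ys = offset m n" using assms by (auto simp: joint_state_def split: if_splits)
  then show ?thesis using assms by (simp add: joint_append)
qed

lemma supp_A:
  assumes "take k F = drop k F" "length a = k" "a @ b = F \<or> a @ b = map Not F"
  shows "b = a"
  using assms
  by (metis append_eq_conv_conj drop_map take_map)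

lemma supp_B:
  assumes "take k F = map Not (drop k F)" "length a = k" "a @ b = F \<or> a @ b = map Not F"
  shows "b = map Not a"
  using assms
  by (metis append_eq_conv_conj drop_map take_map map_Not_eq)

lemma ghz_nonzero: "ghz c sg z \<noteq> 0 \<Longrightarrow> z = False # c \<or> z = map Not (False # c)"
  by (auto simp: ghz_def ket_def split: if_splits)

lemma fin_bs: "finite (bitstrings M)"
  using finite_lists_length_eq[of "UNIV :: bool set" M] by (simp add: bitstrings_def)

lemma w_ne: "False # b \<noteq> map Not (False # b)" by simp

lemma qnorm_ghz:
  assumes "length b = M - 1" "M > 0" "t = 1 \<or> t = -1"
  shows "qnorm M (\<lambda>ys. C * ghz b t ys) = cmod C"
proof -
  let ?w = "False # b"
  have mem: "?w \<in> bitstrings M" "map Not ?w \<in> bitstrings M"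
    using assms by (auto simp: bitstrings_def)
  have pt: "(cmod (C * ghz b t ys))^2 = (if ys = ?w then (cmod C)^2/2 else 0) + (if ys = map Not ?w then (cmod C)^2/2 else 0)" for ys
    using assms(3) by (auto simp: ghz_def ket_def norm_mult norm_divide power_mult_distrib power_divide)
  have "(\<Sum>ys\<in>bitstrings M. (cmod (C * ghz b t ys))^2) = (cmod C)^2"
    unfolding pt sum.distrib using mem fin_bs[of M] by simp
  then show ?thesis by (simp add: qnorm_def)
qed

lemma final_same:
  assumes pp: "P = (\<lambda>ys. C * ghz b t ys)" and len: "length b = M - 1" "M > 0"
    and sg: "sg = 1 \<or> sg = -1" and q: "qnorm M P > 0"
  shows "(t = sg \<longrightarrow> same_state (\<lambda>ys. P ys / complex_of_real (qnorm M P)) (ghz b sg))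
       \<and> (t = - sg \<longrightarrow> \<not> same_state (\<lambda>ys. P ys / complex_of_real (qnorm M P)) (ghz b sg))"
proof (intro conjI impI)
  have "C \<noteq> 0" using q pp by (auto simp: qnorm_def)
  assume "t = sg"
  then have qe: "qnorm M P = cmod C" using pp qnorm_ghz[OF len sg] by simp
  show "same_state (\<lambda>ys. P ys / complex_of_real (qnorm M P)) (ghz b sg)"
    unfolding same_state_def
  proof (intro exI conjI)
    show "cmod (C / complex_of_real (cmod C)) = 1" using \<open>C \<noteq> 0\<close> by (simp add: norm_divide)
    show "(\<lambda>ys. P ys / complex_of_real (qnorm M P)) = (\<lambda>xs. C / complex_of_real (cmod C) * ghz b sg xs)"
      using qe pp \<open>t = sg\<close> by auto
  qed
next
  assume t: "t = - sg"
  show "\<not> same_state (\<lambda>ys. P ys / complex_of_real (qnorm M P)) (ghz b sg)"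
  proof
    assume "same_state (\<lambda>ys. P ys / complex_of_real (qnorm M P)) (ghz b sg)"
    then obtain c where c: "cmod c = 1" "(\<lambda>ys. P ys / complex_of_real (qnorm M P)) = (\<lambda>xs. c * ghz b sg xs)"
      unfolding same_state_def by blast
    let ?q = "complex_of_real (qnorm M P)"
    have r: "complex_of_real (sqrt 2) \<noteq> 0" by simp
    have e1: "P (False # b) / ?q = c * ghz b sg (False # b)" using c(2) by metis
    have e2: "P (map Not (False # b)) / ?q = c * ghz b sg (map Not (False # b))" using c(2) by metis
    have a1: "C / ?q = c" using e1 r unfolding pp by (simp add: ghz_def ket_def field_simps)
    have a2: "C * t / ?q = c * sg" using e2 r unfolding pp by (simp add: ghz_def ket_def field_simps)
    have "sg * sg = 1" using sg by auto
    then have "c = - c" using a1 a2 t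
      by (metis minus_mult_right mult.commute mult.left_commute mult_1 times_divide_eq_left)
    then have "c = 0" by simp
    then show False using c(1) by simp
  qed
qed

lemma pp_formula:
  assumes "g = ghz b sg" "length b = M - 1" "M > 0" "sg = 1 \<or> sg = -1"
  shows "partial_proj M g J ys = (J ((False # b) @ ys) + sg * J (map Not (False # b) @ ys)) / complex_of_real (sqrt 2)"
proof -
  let ?w = "False # b"
  have mem: "?w \<in> bitstrings M" "map Not ?w \<in> bitstrings M"
    using assms by (auto simp: bitstrings_def)
  have cs: "cnj sg = sg" using assms(4) by auto
  have pt: "cnj (g xs) * J (xs @ ys) = (if xs = ?w then J (?w @ ys) / complex_of_real (sqrt 2) else 0)
     + (if xs = map Not ?w then sg * J (map Not ?w @ ys) / complex_of_real (sqrt 2) else 0)" for xs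
    using assms(1) cs by (auto simp: ghz_def ket_def)
  show ?thesis unfolding partial_proj_def pt sum.distrib using mem fin_bs[of M]
    by (simp add: add_divide_distrib)
qed

theorem corollary1:
  fixes n :: nat and m :: "nat \<Rightarrow> nat" and i :: "nat \<Rightarrow> bool list"
    and s :: "nat \<Rightarrow> real" and g :: "bool list \<Rightarrow> complex"
  assumes "n \<ge> 2"
    and "\<forall>h<n. m h \<ge> 1"
    and "\<forall>h<n. length (i h) = 2 * m h - 1"
    and "\<forall>h<n. s h = 1 \<or> s h = -1"
    and "(\<forall>h<n. take (m h) (False # i h) = drop (m h) (False # i h))
       \<or> (\<forall>h<n. take (m h) (False # i h) = map Not (drop (m h) (False # i h)))"
    and "g \<in> ghz_basis (offset m n)"
    and "outcome_prob (offset m n) (offset m n) g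
           (joint_state n m (\<lambda>h. ghz (i h) (complex_of_real (s h)))) > 0"
  shows "((\<forall>h<n. s h = 1) \<longrightarrow>
            same_state (post_state (offset m n) (offset m n) g
              (joint_state n m (\<lambda>h. ghz (i h) (complex_of_real (s h))))) g)
       \<and> ((\<forall>h<n. s h = -1) \<longrightarrow>
            (same_state (post_state (offset m n) (offset m n) g
              (joint_state n m (\<lambda>h. ghz (i h) (complex_of_real (s h))))) g \<longleftrightarrow> even n))"
proof -
  define M where "M = offset m n"
  define G where "G = (\<lambda>h. ghz (i h) (complex_of_real (s h)))"
  define J where "J = joint_state n m G"
  define \<sigma> where "\<sigma> = (\<Prod>h<n. complex_of_real (s h))"
  obtain b sg where g: "g = ghz b sg" "length b = M - 1" "sg = 1 \<or> sg = -1"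
    using assms(6) unfolding ghz_basis_def M_def by blast
  have "n \<le> M" unfolding M_def offset_def
    using sum_mono[of "{..<n}" "\<lambda>_. 1::nat" m] assms(2) by simp
  then have Mpos: "M > 0" using assms(1) by simp
  define w where "w = False # b"
  have lw: "length w = M" "length (map Not w) = M" using g(2) Mpos by (auto simp: w_def)
  have wne: "w \<noteq> map Not w" "map Not w \<noteq> w" by (auto simp: w_def)
  have mnw: "map Not w = True # map Not b" by (simp add: w_def)
  have nn: "map Not (map Not z) = z" for z :: "bool list" by (simp add: comp_def)
  have flip: "J (map Not z) = \<sigma> * J z" for z
    unfolding J_def \<sigma>_def
    by (rule joint_flip) (use assms(4) in \<open>auto simp: G_def intro!: ghz_flip\<close>)
  have "\<sigma> * \<sigma> = (\<Prod>h<n. complex_of_real (s h) * complex_of_real (s h))"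
    by (simp add: \<sigma>_def prod.distrib)
  also have "\<dots> = 1" using assms(4) by (intro prod.neutral) auto
  finally have ss: "\<sigma> * \<sigma> = 1" .
  have sgsg: "sg * sg = 1" using g(3) by auto
  have pp: "partial_proj M g J = (\<lambda>ys. (J (w @ ys) + sg * J (map Not w @ ys)) / complex_of_real (sqrt 2))"
    using pp_formula[OF g(1) g(2) Mpos g(3)] unfolding w_def by auto
  have ghzb: "ghz b t ys = (ket w ys + t * ket (map Not w) ys) / complex_of_real (sqrt 2)" for t ys
    by (simp add: ghz_def w_def)
  have facts: "\<forall>h<n. G h (chunk m h xs @ chunk m h ys) \<noteq> 0 \<and> length (chunk m h xs) = m h
      \<and> length (chunk m h ys) = m h" if "length xs = M" "J (xs @ ys) \<noteq> 0" for xs ys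
    using joint_nonzero[of n m G xs ys] that len_chunk[of _ m n] unfolding J_def M_def by auto
  have Fnz: "G h z \<noteq> 0 \<Longrightarrow> z = False # i h \<or> z = map Not (False # i h)" for h z
    unfolding G_def by (rule ghz_nonzero)
  have ex: "\<exists>C. partial_proj M g J = (\<lambda>ys. C * ghz b (sg * \<sigma>) ys)"
    using assms(5)
  proof
    assume A: "\<forall>h<n. take (m h) (False # i h) = drop (m h) (False # i h)"
    have supp: "ys = xs" if "length xs = M" "J (xs @ ys) \<noteq> 0" for xs ys
    proof -
      have ly: "length ys = M" using that joint_nonzero[of n m G xs ys] unfolding J_def M_def by auto
      have "\<forall>h<n. chunk m h ys = chunk m h xs"
      proof (intro allI impI)
        fix h assume h: "h < n"
        then show "chunk m h ys = chunk m h xs"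
          using supp_A[OF A[rule_format, OF h], of "chunk m h xs" "chunk m h ys"] facts[OF that] Fnz
          by blast
      qed
      then show ?thesis using chunk_eq_imp_eq[of ys m n xs] ly that(1) unfolding M_def by simp
    qed
    show ?thesis
    proof (intro exI ext)
      fix ys
      show "partial_proj M g J ys = J (w @ w) * ghz b (sg * \<sigma>) ys"
      proof (cases "ys = w")
        case True
        have "J (map Not w @ w) = 0" using supp[of "map Not w" w] lw wne by auto
        then show ?thesis using True wne by (simp add: pp ghzb ket_def)
      next
        case F1: False
        show ?thesis
        proof (cases "ys = map Not w")
          case True
          have "J (w @ map Not w) = 0" using supp[of w "map Not w"] lw wne by auto
          moreover have "J (map Not w @ map Not w) = \<sigma> * J (w @ w)"
            using flip[of "w @ w"] by simp
          ultimately show ?thesis using True wne by (simp add: pp ghzb ket_def)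
        next
          case False
          have "J (w @ ys) = 0" "J (map Not w @ ys) = 0"
            using supp[of w ys] supp[of "map Not w" ys] lw F1 False by auto
          then show ?thesis using F1 False by (simp add: pp ghzb ket_def)
        qed
      qed
    qed
  next
    assume B: "\<forall>h<n. take (m h) (False # i h) = map Not (drop (m h) (False # i h))"
    have supp: "ys = map Not xs" if "length xs = M" "J (xs @ ys) \<noteq> 0" for xs ys
    proof -
      have ly: "length ys = M" using that joint_nonzero[of n m G xs ys] unfolding J_def M_def by auto
      have "\<forall>h<n. chunk m h ys = chunk m h (map Not xs)"
      proof (intro allI impI)
        fix h assume h: "h < n"
        then show "chunk m h ys = chunk m h (map Not xs)"
          using supp_B[OF B[rule_format, OF h], of "chunk m h xs" "chunk m h ys"] facts[OF that] Fnz
          by (simp add: chunk_map)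
      qed
      then show ?thesis using chunk_eq_imp_eq[of ys m n "map Not xs"] ly that(1) unfolding M_def by simp
    qed
    show ?thesis
    proof (intro exI ext)
      fix ys
      show "partial_proj M g J ys = J (w @ map Not w) * sg * \<sigma> * ghz b (sg * \<sigma>) ys"
      proof (cases "ys = w")
        case True
        have "J (w @ w) = 0" using supp[of w w] lw wne by auto
        moreover have "J (map Not w @ w) = \<sigma> * J (w @ map Not w)"
          using flip[of "w @ map Not w"] by (simp add: comp_def)
        ultimately show ?thesis using True wne by (simp add: pp ghzb ket_def)
      next
        case F1: False
        show ?thesis
        proof (cases "ys = map Not w")
          case True
          have "J (map Not w @ map Not w) = 0" using supp[of "map Not w" "map Not w"] lw wne by (auto simp: comp_def)
          moreover have "J (w @ map Not w) * sg * \<sigma> * (sg * \<sigma>) = J (w @ map Not w)"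
            using ss sgsg by (metis mult.assoc mult.left_commute mult_1_right)
          ultimately show ?thesis using True wne by (simp add: pp ghzb ket_def)
        next
          case False
          have "J (w @ ys) = 0" "J (map Not w @ ys) = 0"
            using supp[of w ys] supp[of "map Not w" ys] lw F1 False by (auto simp: comp_def)
          then show ?thesis using F1 False by (simp add: pp ghzb ket_def)
        qed
      qed
    qed
  qed
  then obtain C where C: "partial_proj M g J = (\<lambda>ys. C * ghz b (sg * \<sigma>) ys)" by blast
  have "outcome_prob M M g J > 0" using assms(7) unfolding M_def J_def G_def .
  then have "qnorm M (partial_proj M g J) \<noteq> 0" unfolding outcome_prob_def by auto
  moreover have "qnorm M (partial_proj M g J) \<ge> 0" unfolding qnorm_def by (simp add: sum_nonneg)
  ultimately have q: "qnorm M (partial_proj M g J) > 0" by simp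
  note fs = final_same[OF C g(2) Mpos g(3) q]
  have post: "post_state M M g J = (\<lambda>ys. partial_proj M g J ys / complex_of_real (qnorm M (partial_proj M g J)))"
    by (simp add: post_state_def)
  have r1: "same_state (post_state M M g J) g" if "\<forall>h<n. s h = 1"
  proof -
    have "\<sigma> = 1" unfolding \<sigma>_def using that by (intro prod.neutral) auto
    then show ?thesis using fs post g(1) by simp
  qed
  have r2: "same_state (post_state M M g J) g \<longleftrightarrow> even n" if "\<forall>h<n. s h = -1"
  proof -
    have "\<sigma> = (\<Prod>h<n. -1)" unfolding \<sigma>_def using that by (intro prod.cong) auto
    then have sv: "\<sigma> = (-1) ^ n" by simp
    show ?thesis
    proof (cases "even n")
      case True
      then have "\<sigma> = 1" using sv by simp
      then show ?thesis using fs post g(1) True by simp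
    next
      case False
      then have "\<sigma> = -1" using sv by simp
      then show ?thesis using fs post g(1) False by simp
    qed
  qed
  show ?thesis using r1 r2 unfolding M_def J_def G_def by blast
qed

end
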